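(* Let $\mu$ be a nonnegative finite measure on the Borel subsets of $[0,\infty)$, and for $\nu\ge 0$ define $|||\mu|||_\nu\in[0,\infty]$ by $|||\mu|||_\nu^2:=\sup_{t>0}t^{-2\nu}\mu([0,t))$. Let $\nu>0$. Then $$\mu([0,\Lambda))+\Lambda^{2\gamma}\int_{[\Lambda,\infty)}\lambda^{-2\gamma}\,d\mu(\lambda)\le\frac{\gamma}{\gamma-\nu}\Lambda^{2\nu}|||\mu|||_\nu^2\quad\text{for all }\Lambda>0\text{ and all }\gamma>\nu,$$ and $$\int_{[0,\Lambda)}\lambda^{-2r}\,d\mu(\lambda)\le\frac{r+\nu}{\nu}\Lambda^{2\nu}|||\mu|||_{r+\nu}^2\quad\text{for all }\Lambda>0\text{ and all }r\ge 0,$$ whenever the respective right-hand side is finite. *)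

theory Defs
  imports "HOL-Analysis.Analysis"
begin

definition tnorm2 :: "real measure \<Rightarrow> real \<Rightarrow> ennreal" where
  "tnorm2 M \<nu> = (SUP t\<in>{0<..}. ennreal (t powr (-2 * \<nu>)) * emeasure M {0..<t})"

definition negpow :: "real \<Rightarrow> real \<Rightarrow> ennreal" where
  "negpow r x = (if x = 0 then (if r = 0 then 1 else \<infinity>) else ennreal (x powr (-2 * r)))"

end

theory Submission
  imports Defs
begin

lemma tail_int:
  fixes c e k :: real
  assumes "c > 0" "e < -1" "k \<ge> 0"
  shows "(\<integral>\<^sup>+x. (if c < x then ennreal (k * x powr e) else 0) \<partial>lborel)
         = ennreal (k * (c powr (e+1) / (-(e+1))))"
proof -
  have h: "((\<lambda>x. k * x powr e) has_integral k * (-(c powr (e+1)) / (e+1))) {c..}"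
    using has_integral_powr_to_inf[OF assms(2,1)] by (rule has_integral_mult_right)
  have "(\<integral>\<^sup>+x. ennreal (k * x powr e) * indicator {c..} x \<partial>lborel) = ennreal (k * (-(c powr (e+1)) / (e+1)))"
    by (rule nn_integral_has_integral_lebesgue'[OF _ h]) (use assms in auto)
  moreover have "(\<integral>\<^sup>+x. (if c < x then ennreal (k * x powr e) else 0) \<partial>lborel)
     = (\<integral>\<^sup>+x. ennreal (k * x powr e) * indicator {c..} x \<partial>lborel)"
    by (intro nn_integral_cong_AE eventually_mono[OF AE_lborel_singleton[of c]]) (auto simp: indicator_def)
  moreover have "k * (-(c powr (e+1)) / (e+1)) = k * (c powr (e+1) / (-(e+1)))"
    using assms by (simp add: field_simps)
  ultimately show ?thesis by simp
qed

lemma fin_int: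
  fixes x L b :: real
  assumes "0 < x" "x < L" "b \<ge> 0"
  shows "(\<integral>\<^sup>+s. (if x < s \<and> s < L then ennreal (b * s powr (-b-1)) else 0) \<partial>lborel)
         = ennreal (x powr (-b) - L powr (-b))"
proof -
  have h: "((\<lambda>s. b * s powr (-b-1)) has_integral ((- (L powr (-b))) - (- (x powr (-b))))) {x..L}"
  proof (rule fundamental_theorem_of_calculus)
    show "x \<le> L" using assms by simp
    fix s assume s: "s \<in> {x..L}"
    hence "s > 0" using assms by auto
    thus "((\<lambda>s. - (s powr (-b))) has_vector_derivative b * s powr (-b-1)) (at s within {x..L})"
      by (auto intro!: derivative_eq_intros simp flip: has_real_derivative_iff_has_vector_derivative
               simp: powr_diff powr_minus field_simps)
  qed
  have "(\<integral>\<^sup>+s. ennreal (b * s powr (-b-1)) * indicator {x..L} s \<partial>lborel) = ennreal ((- (L powr (-b))) - (- (x powr (-b))))"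
    by (rule nn_integral_has_integral_lebesgue'[OF _ h]) (use assms in auto)
  moreover have "(\<integral>\<^sup>+s. (if x < s \<and> s < L then ennreal (b * s powr (-b-1)) else 0) \<partial>lborel)
     = (\<integral>\<^sup>+s. ennreal (b * s powr (-b-1)) * indicator {x..L} s \<partial>lborel)"
    by (intro nn_integral_cong_AE eventually_mono[OF eventually_conj[OF AE_lborel_singleton[of x] AE_lborel_singleton[of L]]]) (auto simp: indicator_def)
  ultimately show ?thesis by simp
qed

lemma head_int:
  fixes L p k :: real
  assumes "0 < L" "p > 0" "k \<ge> 0"
  shows "(\<integral>\<^sup>+s. (if 0 < s \<and> s < L then ennreal (k * s powr (p-1)) else 0) \<partial>lborel)
         = ennreal (k * (L powr p / p))"
proof -
  have h: "((\<lambda>s. k * s powr (p-1)) has_integral k * (L powr (p - 1 + 1) / (p - 1 + 1))) {0..L}"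
    using has_integral_powr_from_0[of "p-1" L] assms by (intro has_integral_mult_right) auto
  have "(\<integral>\<^sup>+s. ennreal (k * s powr (p-1)) * indicator {0..L} s \<partial>lborel) = ennreal (k * (L powr (p - 1 + 1) / (p - 1 + 1)))"
    by (rule nn_integral_has_integral_lebesgue'[OF _ h]) (use assms in auto)
  moreover have "(\<integral>\<^sup>+s. (if 0 < s \<and> s < L then ennreal (k * s powr (p-1)) else 0) \<partial>lborel)
     = (\<integral>\<^sup>+s. ennreal (k * s powr (p-1)) * indicator {0..L} s \<partial>lborel)"
    by (intro nn_integral_cong_AE eventually_mono[OF eventually_conj[OF AE_lborel_singleton[of 0] AE_lborel_singleton[of L]]]) (auto simp: indicator_def)
  ultimately show ?thesis by simp
qed

lemma tbound:
  assumes "s > 0"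
  shows "emeasure M {0..<s} \<le> ennreal (s powr q) * tnorm2 M (q/2)"
proof -
  have "ennreal (s powr (-2 * (q/2))) * emeasure M {0..<s} \<le> tnorm2 M (q/2)"
    unfolding tnorm2_def using assms by (intro SUP_upper) auto
  hence "ennreal (s powr q) * (ennreal (s powr (-2 * (q/2))) * emeasure M {0..<s}) \<le> ennreal (s powr q) * tnorm2 M (q/2)"
    by (rule mult_left_mono) auto
  moreover have "ennreal (s powr q) * ennreal (s powr (-2 * (q/2))) = 1"
    using assms by (simp add: ennreal_mult''[symmetric] powr_add[symmetric])
  ultimately show ?thesis by (simp add: mult.assoc[symmetric])
qed

lemma meas_pair:
  assumes "sets M = sets borel"
    and "f \<in> borel_measurable (borel \<Otimes>\<^sub>M (borel::real measure))"
  shows "f \<in> borel_measurable (M \<Otimes>\<^sub>M (lborel::real measure))"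
proof -
  have "sets (M \<Otimes>\<^sub>M (lborel::real measure)) = sets (borel \<Otimes>\<^sub>M borel)"
    by (intro sets_pair_measure_cong assms) simp
  thus ?thesis using assms(2) measurable_cong_sets by blast
qed

lemma part1:
  assumes sM: "sets M = sets borel" and fin: "finite_measure M"
    and nu: "\<nu> > 0" and L: "\<Lambda> > 0" and g: "\<gamma> > \<nu>"
  shows "emeasure M {0..<\<Lambda>} + ennreal (\<Lambda> powr (2 * \<gamma>)) * (\<integral>\<^sup>+ x\<in>{\<Lambda>..}. negpow \<gamma> x \<partial>M)
              \<le> ennreal (\<gamma> / (\<gamma> - \<nu>) * \<Lambda> powr (2 * \<nu>)) * tnorm2 M \<nu>"
proof -
  interpret finite_measure M by (rule fin)
  interpret P: pair_sigma_finite M "lborel :: real measure"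
    unfolding pair_sigma_finite_def using sigma_finite_measure_axioms by (simp add: lborel.sigma_finite_measure_axioms)
  define a where "a = 2*\<gamma>"
  define p where "p = 2*\<nu>"
  define T where "T = tnorm2 M \<nu>"
  have a0: "a > 0" and p0: "p > 0" and pa: "p < a" using nu g by (auto simp: a_def p_def)
  have sets_eq[measurable_cong]: "sets M = sets borel" by (rule sM)
  define F where "F = (\<lambda>x s. ennreal (\<Lambda> powr a) * ((if \<Lambda> < s then ennreal (a * s powr (-a-1)) else 0) * indicator {0..<s} (x::real)))"
  have Fm: "(\<lambda>(x,s). F x s) \<in> borel_measurable (M \<Otimes>\<^sub>M lborel)"
    by (rule meas_pair[OF sM]) (unfold F_def indicator_def atLeastLessThan_iff, measurable)
  have inner: "(\<integral>\<^sup>+s. F x s \<partial>lborel) = indicator {0..<\<Lambda>} x + ennreal (\<Lambda> powr a) * (negpow \<gamma> x * indicator {\<Lambda>..} x)" for x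
  proof (cases "x \<ge> 0")
    case True
    have "(\<integral>\<^sup>+s. F x s \<partial>lborel) = (\<integral>\<^sup>+s. ennreal (\<Lambda> powr a) * (if max x \<Lambda> < s then ennreal (a * s powr (-a-1)) else 0) \<partial>lborel)"
      unfolding F_def by (intro nn_integral_cong) (auto simp: indicator_def True)
    also have "\<dots> = ennreal (\<Lambda> powr a) * (\<integral>\<^sup>+s. (if max x \<Lambda> < s then ennreal (a * s powr (-a-1)) else 0) \<partial>lborel)"
      by (rule nn_integral_cmult) measurable
    also have "\<dots> = ennreal (\<Lambda> powr a) * ennreal (a * (max x \<Lambda> powr (-a-1+1) / (-(-a-1+1))))"
      using L a0 by (subst tail_int) auto
    also have "\<dots> = indicator {0..<\<Lambda>} x + ennreal (\<Lambda> powr a) * (negpow \<gamma> x * indicator {\<Lambda>..} x)"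
    proof (cases "x < \<Lambda>")
      case True
      then show ?thesis using \<open>x \<ge> 0\<close> a0 L
        by (simp add: ennreal_mult''[symmetric] powr_add[symmetric] indicator_def max_def)
    next
      case False
      then have "x > 0" using L by simp
      then show ?thesis using False a0 L
        by (simp add: ennreal_mult''[symmetric] indicator_def max_def negpow_def a_def)
    qed
    finally show ?thesis .
  next
    case False
    then show ?thesis using L by (simp add: F_def indicator_def)
  qed
  have "emeasure M {0..<\<Lambda>} + ennreal (\<Lambda> powr (2 * \<gamma>)) * (\<integral>\<^sup>+ x\<in>{\<Lambda>..}. negpow \<gamma> x \<partial>M)
      = (\<integral>\<^sup>+x. indicator {0..<\<Lambda>} x \<partial>M) + (\<integral>\<^sup>+x. ennreal (\<Lambda> powr a) * (negpow \<gamma> x * indicator {\<Lambda>..} x) \<partial>M)"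
    by (subst nn_integral_cmult) (auto simp: a_def negpow_def)
  also have "\<dots> = (\<integral>\<^sup>+x. (\<integral>\<^sup>+s. F x s \<partial>lborel) \<partial>M)"
    unfolding inner by (rule nn_integral_add[symmetric]) (auto simp: negpow_def)
  also have "\<dots> = (\<integral>\<^sup>+s. (\<integral>\<^sup>+x. F x s \<partial>M) \<partial>lborel)"
    by (rule P.Fubini'[OF Fm, symmetric])
  also have "\<dots> = (\<integral>\<^sup>+s. ennreal (\<Lambda> powr a) * ((if \<Lambda> < s then ennreal (a * s powr (-a-1)) else 0) * emeasure M {0..<s}) \<partial>lborel)"
    unfolding F_def
    by (intro nn_integral_cong) (simp add: nn_integral_cmult nn_integral_multc)
  also have "\<dots> \<le> (\<integral>\<^sup>+s. ennreal (\<Lambda> powr a) * (if \<Lambda> < s then ennreal (a * s powr (p-a-1)) else 0) * T \<partial>lborel)"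
  proof (intro nn_integral_mono)
    fix s :: real
    show "ennreal (\<Lambda> powr a) * ((if \<Lambda> < s then ennreal (a * s powr (-a-1)) else 0) * emeasure M {0..<s})
        \<le> ennreal (\<Lambda> powr a) * (if \<Lambda> < s then ennreal (a * s powr (p-a-1)) else 0) * T"
    proof (cases "\<Lambda> < s")
      case True
      then have s0: "s > 0" using L by simp
      have "emeasure M {0..<s} \<le> ennreal (s powr p) * T"
        using tbound[OF s0, of M p] by (simp add: T_def p_def)
      hence "ennreal (a * s powr (-a-1)) * emeasure M {0..<s} \<le> ennreal (a * s powr (-a-1)) * (ennreal (s powr p) * T)"
        by (rule mult_left_mono) simp
      also have "\<dots> = ennreal (a * s powr (p-a-1)) * T"
      proof -
        have e: "p-a-1 = -a-1+p" by simp
        have "s powr (-a-1) * s powr p = s powr (p-a-1)" by (simp only: e powr_add)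
        thus ?thesis using s0 a0 by (simp add: ennreal_mult''[symmetric] mult.assoc[symmetric])
          (simp add: mult.assoc)
      qed
      finally have "ennreal (a * s powr (-a-1)) * emeasure M {0..<s} \<le> ennreal (a * s powr (p-a-1)) * T" .
      from mult_left_mono[OF this, of "ennreal (\<Lambda> powr a)"]
      show ?thesis using True by (simp add: mult.assoc)
    qed simp
  qed
  also have "\<dots> = ennreal (\<Lambda> powr a) * (\<integral>\<^sup>+s. (if \<Lambda> < s then ennreal (a * s powr (p-a-1)) else 0) \<partial>lborel) * T"
  proof -
    have m: "(\<lambda>s::real. (if \<Lambda> < s then ennreal (a * s powr (p-a-1)) else 0)) \<in> borel_measurable lborel"
      by measurable
    show ?thesis
      by (simp only: nn_integral_multc[OF borel_measurable_times_ennreal[OF borel_measurable_const m]] nn_integral_cmult[OF m])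
  qed
  also have "\<dots> = ennreal (\<Lambda> powr a) * ennreal (a * (\<Lambda> powr (p-a-1+1) / (-(p-a-1+1)))) * T"
    using L a0 pa by (subst tail_int) auto
  also have "\<dots> = ennreal (\<gamma> / (\<gamma> - \<nu>) * \<Lambda> powr (2 * \<nu>)) * T"
  proof -
    have "\<Lambda> powr a * (a * (\<Lambda> powr (p-a-1+1) / (-(p-a-1+1)))) = \<gamma> / (\<gamma> - \<nu>) * \<Lambda> powr (2 * \<nu>)"
    proof -
      have "\<Lambda> powr a * \<Lambda> powr (p-a) = \<Lambda> powr p" by (simp add: powr_add[symmetric])
      moreover have "a / (a - p) = \<gamma> / (\<gamma> - \<nu>)" using g by (simp add: a_def p_def field_simps)
      moreover have "\<Lambda> powr a * (a * (\<Lambda> powr (p-a-1+1) / (-(p-a-1+1)))) = (\<Lambda> powr a * \<Lambda> powr (p-a)) * (a / (a - p))"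
        by (simp add: divide_inverse mult_ac)
      ultimately show ?thesis by (simp add: p_def)
    qed
    thus ?thesis by (metis ennreal_mult' powr_ge_zero)
  qed
  finally show ?thesis by (simp add: T_def)
qed
lemma part2:
  assumes sM: "sets M = sets borel" and fin: "finite_measure M"
    and nu: "\<nu> > 0" and L: "\<Lambda> > 0" and r: "r \<ge> 0"
    and finT: "tnorm2 M (r+\<nu>) < \<infinity>"
  shows "(\<integral>\<^sup>+ x\<in>{0..<\<Lambda>}. negpow r x \<partial>M) \<le> ennreal ((r + \<nu>) / \<nu> * \<Lambda> powr (2 * \<nu>)) * tnorm2 M (r + \<nu>)"
proof -
  interpret finite_measure M by (rule fin)
  interpret P: pair_sigma_finite M "lborel :: real measure"
    unfolding pair_sigma_finite_def using sigma_finite_measure_axioms by (simp add: lborel.sigma_finite_measure_axioms)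
  define b where "b = 2*r"
  define p where "p = 2*\<nu>"
  define q where "q = b + p"
  define T where "T = tnorm2 M (r+\<nu>)"
  have b0: "b \<ge> 0" and p0: "p > 0" and q0: "q > 0" using nu r by (auto simp: b_def p_def q_def)
  have sets_eq[measurable_cong]: "sets M = sets borel" by (rule sM)
  have bound: "emeasure M {0..<s} \<le> ennreal (s powr q) * T" if "s > 0" for s
  proof -
    have h: "q/2 = r+\<nu>" by (simp add: q_def b_def p_def)
    show ?thesis using tbound[OF that, of M q] by (simp only: h T_def)
  qed
  obtain c where c: "T = ennreal c" "c \<ge> 0" using finT unfolding T_def by (cases "tnorm2 M (r+\<nu>)" rule: ennreal_cases) auto
  have zero: "emeasure M {0} = 0"
  proof (rule ccontr)
    define m where "m = measure M {0}"
    assume "emeasure M {0} \<noteq> 0"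
    have "emeasure M {0} = ennreal m" by (simp add: emeasure_eq_measure m_def)
    with \<open>emeasure M {0} \<noteq> 0\<close> have "m \<noteq> 0" by auto
    hence m0: "m > 0" using measure_nonneg[of M "{0}"] unfolding m_def by linarith
    define t where "t = (m/(c+1)) powr (1/q)"
    have t0: "t > 0" using m0 c(2) by (simp add: t_def)
    have tq: "t powr q = m/(c+1)" using m0 c(2) q0 by (simp add: t_def powr_powr)
    have "emeasure M {0} \<le> emeasure M {0..<t}" using t0 by (intro emeasure_mono) auto
    also have "\<dots> \<le> ennreal (t powr q) * T" by (rule bound[OF t0])
    also have "\<dots> = ennreal (m/(c+1) * c)" using c m0 by (simp add: tq ennreal_mult''[symmetric])
    finally have "m \<le> m/(c+1) * c" using c m0 by (simp add: emeasure_eq_measure m_def ennreal_le_iff)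
    moreover have "m/(c+1) * c < m" using m0 c(2) by (simp add: field_simps)
    ultimately show False by simp
  qed
  have AE0: "AE x in M. x \<noteq> 0"
    by (rule AE_I'[of "{0}"]) (auto simp: zero sM)
  define H where "H = (\<lambda>x::real. if 0 < x \<and> x < \<Lambda> then ennreal (x powr (-b)) else 0)"
  define F where "F = (\<lambda>x s::real. (if 0 < s \<and> s < \<Lambda> then ennreal (b * s powr (-b-1)) else 0) * indicator {0<..<s} x)"
  have Fm: "(\<lambda>(x,s). F x s) \<in> borel_measurable (M \<Otimes>\<^sub>M lborel)"
    by (rule meas_pair[OF sM]) (unfold F_def indicator_def greaterThanLessThan_iff, measurable)
  have inner: "(\<integral>\<^sup>+s. F x s \<partial>lborel) = (if 0 < x \<and> x < \<Lambda> then ennreal (x powr (-b) - \<Lambda> powr (-b)) else 0)" for x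
  proof (cases "0 < x \<and> x < \<Lambda>")
    case True
    have "(\<integral>\<^sup>+s. F x s \<partial>lborel) = (\<integral>\<^sup>+s. (if x < s \<and> s < \<Lambda> then ennreal (b * s powr (-b-1)) else 0) \<partial>lborel)"
      unfolding F_def using True by (intro nn_integral_cong) (auto simp: indicator_def)
    also have "\<dots> = ennreal (x powr (-b) - \<Lambda> powr (-b))"
      using True b0 by (intro fin_int) auto
    finally show ?thesis using True by simp
  next
    case False
    hence "F x s = 0" for s unfolding F_def by (auto simp: indicator_def)
    hence z: "(\<integral>\<^sup>+s. F x s \<partial>lborel) = 0" by simp
    show ?thesis by (simp only: z if_not_P[OF False])
  qed
  have Hdec: "H x = ennreal (\<Lambda> powr (-b)) * indicator {0<..<\<Lambda>} x + (\<integral>\<^sup>+s. F x s \<partial>lborel)" for x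
  proof (cases "0 < x \<and> x < \<Lambda>")
    case True
    have "\<Lambda> powr (-b) \<le> x powr (-b)" using True b0 by (intro powr_mono2') auto
    thus ?thesis using True by (simp add: inner H_def ennreal_plus[symmetric] del: ennreal_plus)
  next
    case False
    have i: "indicator {0<..<\<Lambda>} x = (0::ennreal)" using False by (simp add: indicator_def)
    show ?thesis by (simp only: inner H_def if_not_P[OF False] i mult_zero_right add_0_right)
  qed
  have "(\<integral>\<^sup>+ x\<in>{0..<\<Lambda>}. negpow r x \<partial>M) = (\<integral>\<^sup>+ x. H x \<partial>M)"
    by (intro nn_integral_cong_AE eventually_mono[OF AE0]) (auto simp: H_def negpow_def b_def indicator_def)
  also have "\<dots> = ennreal (\<Lambda> powr (-b)) * emeasure M {0<..<\<Lambda>} + (\<integral>\<^sup>+x. (\<integral>\<^sup>+s. F x s \<partial>lborel) \<partial>M)"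
  proof -
    have m1: "(\<lambda>x. ennreal (\<Lambda> powr (-b)) * indicator {0<..<\<Lambda>} x) \<in> borel_measurable M"
      using sM by measurable
    have m2: "(\<lambda>x. \<integral>\<^sup>+s. F x s \<partial>lborel) \<in> borel_measurable M"
      by (rule lborel.borel_measurable_nn_integral[OF Fm])
    have "{0<..<\<Lambda>} \<in> sets M" using sM by simp
    thus ?thesis unfolding Hdec nn_integral_add[OF m1 m2] by (simp add: nn_integral_cmult_indicator)
  qed
  finally have I0: "(\<integral>\<^sup>+ x\<in>{0..<\<Lambda>}. negpow r x \<partial>M) = ennreal (\<Lambda> powr (-b)) * emeasure M {0<..<\<Lambda>} + (\<integral>\<^sup>+x. (\<integral>\<^sup>+s. F x s \<partial>lborel) \<partial>M)" .
  have "(\<integral>\<^sup>+x. (\<integral>\<^sup>+s. F x s \<partial>lborel) \<partial>M) = (\<integral>\<^sup>+s. (\<integral>\<^sup>+x. F x s \<partial>M) \<partial>lborel)"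
    by (rule P.Fubini'[OF Fm, symmetric])
  also have "\<dots> = (\<integral>\<^sup>+s. (if 0 < s \<and> s < \<Lambda> then ennreal (b * s powr (-b-1)) else 0) * emeasure M {0<..<s} \<partial>lborel)"
    unfolding F_def by (intro nn_integral_cong) (simp add: nn_integral_cmult)
  also have "\<dots> \<le> (\<integral>\<^sup>+s. (if 0 < s \<and> s < \<Lambda> then ennreal (b * s powr (p-1)) else 0) * T \<partial>lborel)"
  proof (intro nn_integral_mono)
    fix s :: real
    show "(if 0 < s \<and> s < \<Lambda> then ennreal (b * s powr (-b-1)) else 0) * emeasure M {0<..<s}
        \<le> (if 0 < s \<and> s < \<Lambda> then ennreal (b * s powr (p-1)) else 0) * T"
    proof (cases "0 < s \<and> s < \<Lambda>")
      case True
      then have s0: "s > 0" by simp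
      have "emeasure M {0<..<s} \<le> emeasure M {0..<s}" by (intro emeasure_mono) (auto simp: sM)
      also have "\<dots> \<le> ennreal (s powr q) * T" by (rule bound[OF s0])
      finally have "ennreal (b * s powr (-b-1)) * emeasure M {0<..<s} \<le> ennreal (b * s powr (-b-1)) * (ennreal (s powr q) * T)"
        by (rule mult_left_mono) simp
      also have "\<dots> = ennreal (b * s powr (p-1)) * T"
      proof -
        have e: "p-1 = (-b-1)+q" by (simp add: q_def)
        have "s powr (-b-1) * s powr q = s powr (p-1)" by (simp only: e powr_add)
        thus ?thesis using s0 b0 by (simp add: ennreal_mult''[symmetric] mult.assoc[symmetric])
          (simp add: mult.assoc)
      qed
      finally show ?thesis using True by simp
    next
      case False
      thus ?thesis by (simp only: if_False mult_zero_left order_refl)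
    qed
  qed
  also have "\<dots> = ennreal (b * (\<Lambda> powr p / p)) * T"
  proof -
    have m: "(\<lambda>s::real. (if 0 < s \<and> s < \<Lambda> then ennreal (b * s powr (p-1)) else 0)) \<in> borel_measurable lborel"
      by measurable
    show ?thesis
      by (simp only: nn_integral_multc[OF m] head_int[OF L p0 b0])
  qed
  finally have "(\<integral>\<^sup>+x. (\<integral>\<^sup>+s. F x s \<partial>lborel) \<partial>M) \<le> ennreal (b * (\<Lambda> powr p / p)) * T" .
  hence I2: "(\<integral>\<^sup>+ x\<in>{0..<\<Lambda>}. negpow r x \<partial>M) \<le> ennreal (\<Lambda> powr (-b)) * emeasure M {0<..<\<Lambda>} + ennreal (b * (\<Lambda> powr p / p)) * T"
    unfolding I0 by (rule add_left_mono)
  have "emeasure M {0<..<\<Lambda>} \<le> emeasure M {0..<\<Lambda>}" by (intro emeasure_mono) (auto simp: sM)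
  also have "\<dots> \<le> ennreal (\<Lambda> powr q) * T" by (rule bound[OF L])
  finally have "ennreal (\<Lambda> powr (-b)) * emeasure M {0<..<\<Lambda>} \<le> ennreal (\<Lambda> powr (-b)) * (ennreal (\<Lambda> powr q) * T)"
    by (rule mult_left_mono) simp
  also have "\<dots> = ennreal (\<Lambda> powr p) * T"
  proof -
    have e: "p = (-b)+q" by (simp add: q_def)
    have "\<Lambda> powr (-b) * \<Lambda> powr q = \<Lambda> powr p" by (simp only: e powr_add)
    thus ?thesis by (simp add: ennreal_mult''[symmetric] mult.assoc[symmetric])
  qed
  finally have I1: "ennreal (\<Lambda> powr (-b)) * emeasure M {0<..<\<Lambda>} \<le> ennreal (\<Lambda> powr p) * T" .
  have "(\<integral>\<^sup>+ x\<in>{0..<\<Lambda>}. negpow r x \<partial>M) \<le> ennreal (\<Lambda> powr p) * T + ennreal (b * (\<Lambda> powr p / p)) * T"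
    using I2 I1 by (meson add_right_mono order_trans)
  also have "\<dots> = ennreal (\<Lambda> powr p + b * (\<Lambda> powr p / p)) * T"
    using b0 p0 by (simp add: distrib_right)
  also have "\<Lambda> powr p + b * (\<Lambda> powr p / p) = (r + \<nu>) / \<nu> * \<Lambda> powr (2 * \<nu>)"
    using nu by (simp add: b_def p_def field_simps)
  finally show ?thesis by (simp add: T_def)
qed
theorem lemma1:
  fixes M :: "real measure" and \<nu> :: real
  assumes "sets M = sets borel"
    and "finite_measure M"
    and "emeasure M {..<0} = 0"
    and "\<nu> > 0"
  shows "(\<forall>\<Lambda>>0. \<forall>\<gamma>>\<nu>.
            ennreal (\<gamma> / (\<gamma> - \<nu>) * \<Lambda> powr (2 * \<nu>)) * tnorm2 M \<nu> < \<infinity> \<longrightarrow>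
            emeasure M {0..<\<Lambda>} + ennreal (\<Lambda> powr (2 * \<gamma>)) * (\<integral>\<^sup>+ x\<in>{\<Lambda>..}. negpow \<gamma> x \<partial>M)
              \<le> ennreal (\<gamma> / (\<gamma> - \<nu>) * \<Lambda> powr (2 * \<nu>)) * tnorm2 M \<nu>)
       \<and> (\<forall>\<Lambda>>0. \<forall>r\<ge>0.
            ennreal ((r + \<nu>) / \<nu> * \<Lambda> powr (2 * \<nu>)) * tnorm2 M (r + \<nu>) < \<infinity> \<longrightarrow>
            (\<integral>\<^sup>+ x\<in>{0..<\<Lambda>}. negpow r x \<partial>M)
              \<le> ennreal ((r + \<nu>) / \<nu> * \<Lambda> powr (2 * \<nu>)) * tnorm2 M (r + \<nu>))"
proof (intro conjI allI impI)
  fix \<Lambda> \<gamma> :: real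
  assume "\<Lambda> > 0" "\<gamma> > \<nu>"
  thus "emeasure M {0..<\<Lambda>} + ennreal (\<Lambda> powr (2 * \<gamma>)) * (\<integral>\<^sup>+ x\<in>{\<Lambda>..}. negpow \<gamma> x \<partial>M)
              \<le> ennreal (\<gamma> / (\<gamma> - \<nu>) * \<Lambda> powr (2 * \<nu>)) * tnorm2 M \<nu>"
    using part1[OF assms(1,2,4)] by blast
next
  fix \<Lambda> r :: real
  assume L: "\<Lambda> > 0" and r: "r \<ge> 0"
    and f: "ennreal ((r + \<nu>) / \<nu> * \<Lambda> powr (2 * \<nu>)) * tnorm2 M (r + \<nu>) < \<infinity>"
  have pos: "(r + \<nu>) / \<nu> * \<Lambda> powr (2 * \<nu>) > 0" using L r assms(4) by simp
  have "tnorm2 M (r + \<nu>) < \<infinity>"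
    using f pos ennreal_mult_less_top[of "ennreal ((r + \<nu>) / \<nu> * \<Lambda> powr (2 * \<nu>))" "tnorm2 M (r + \<nu>)"]
    by auto
  thus "(\<integral>\<^sup>+ x\<in>{0..<\<Lambda>}. negpow r x \<partial>M)
              \<le> ennreal ((r + \<nu>) / \<nu> * \<Lambda> powr (2 * \<nu>)) * tnorm2 M (r + \<nu>)"
    using part2[OF assms(1,2,4) L r] by blast
qed

end
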